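(* Let $G$ be a connected $n$-vertex graph with maximum degree at most $3$ that is not isomorphic to any of $C_4$, $C_4'$, $K_4$. Then \[\iota(G, C_4) \leq \left\lfloor \frac{n}{5} \right\rfloor.\]
   Context: All graphs are finite and simple. For a graph $G$ and $D \subseteq V(G)$, $N[D]$ denotes the closed neighbourhood of $D$ and $G - N[D]$ the subgraph induced by $V(G)\setminus N[D]$. A set $D \subseteq V(G)$ is a $C_4$-isolating set of $G$ if $G - N[D]$ contains no subgraph isomorphic to the $4$-cycle $C_4$; $\iota(G, C_4)$ is the minimum size of such a set. $C_4'$ is the diamond graph on $\{1,2,3,4\}$ with edges $12,23,34,41,13$, and $K_4$ is the complete graph on $4$ vertices. *)

theory Defs
  imports Main
begin

definition simple_graph :: "'a set \<Rightarrow> ('a \<Rightarrow> 'a \<Rightarrow> bool) \<Rightarrow> bool" where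
  "simple_graph V E \<longleftrightarrow> finite V \<and> (\<forall>u v. E u v \<longrightarrow> E v u) \<and> (\<forall>v. \<not> E v v)
     \<and> (\<forall>u v. E u v \<longrightarrow> u \<in> V \<and> v \<in> V)"

definition degree :: "'a set \<Rightarrow> ('a \<Rightarrow> 'a \<Rightarrow> bool) \<Rightarrow> 'a \<Rightarrow> nat" where
  "degree V E v = card {u \<in> V. E v u}"

definition max_degree_le :: "'a set \<Rightarrow> ('a \<Rightarrow> 'a \<Rightarrow> bool) \<Rightarrow> nat \<Rightarrow> bool" where
  "max_degree_le V E k \<longleftrightarrow> (\<forall>v\<in>V. degree V E v \<le> k)"

definition connected_graph :: "'a set \<Rightarrow> ('a \<Rightarrow> 'a \<Rightarrow> bool) \<Rightarrow> bool" where
  "connected_graph V E \<longleftrightarrow> V \<noteq> {} \<and>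
     (\<forall>u\<in>V. \<forall>v\<in>V. (\<lambda>x y. E x y \<and> x \<in> V \<and> y \<in> V)\<^sup>*\<^sup>* u v)"

definition graph_iso :: "'a set \<Rightarrow> ('a \<Rightarrow> 'a \<Rightarrow> bool) \<Rightarrow> 'b set \<Rightarrow> ('b \<Rightarrow> 'b \<Rightarrow> bool) \<Rightarrow> bool" where
  "graph_iso V E W F \<longleftrightarrow> (\<exists>f. bij_betw f V W \<and> (\<forall>u\<in>V. \<forall>v\<in>V. E u v \<longleftrightarrow> F (f u) (f v)))"

definition C4_edges :: "nat \<Rightarrow> nat \<Rightarrow> bool" where
  "C4_edges u v \<longleftrightarrow> {u, v} \<in> {{1,2},{2,3},{3,4},{4,1}}"

definition diamond_edges :: "nat \<Rightarrow> nat \<Rightarrow> bool" where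
  "diamond_edges u v \<longleftrightarrow> {u, v} \<in> {{1,2},{2,3},{3,4},{4,1},{1,3}}"

definition K4_edges :: "nat \<Rightarrow> nat \<Rightarrow> bool" where
  "K4_edges u v \<longleftrightarrow> u \<in> {1..4} \<and> v \<in> {1..4} \<and> u \<noteq> v"

definition closed_nbhd :: "'a set \<Rightarrow> ('a \<Rightarrow> 'a \<Rightarrow> bool) \<Rightarrow> 'a set \<Rightarrow> 'a set" where
  "closed_nbhd V E D = D \<union> {v \<in> V. \<exists>d\<in>D. E d v}"

definition has_C4_subgraph :: "'a set \<Rightarrow> ('a \<Rightarrow> 'a \<Rightarrow> bool) \<Rightarrow> bool" where
  "has_C4_subgraph S E \<longleftrightarrow> (\<exists>a\<in>S. \<exists>b\<in>S. \<exists>c\<in>S. \<exists>d\<in>S. distinct [a, b, c, d] \<and>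
      E a b \<and> E b c \<and> E c d \<and> E d a)"

definition C4_isolating :: "'a set \<Rightarrow> ('a \<Rightarrow> 'a \<Rightarrow> bool) \<Rightarrow> 'a set \<Rightarrow> bool" where
  "C4_isolating V E D \<longleftrightarrow> D \<subseteq> V \<and> \<not> has_C4_subgraph (V - closed_nbhd V E D) E"

definition iota_C4 :: "'a set \<Rightarrow> ('a \<Rightarrow> 'a \<Rightarrow> bool) \<Rightarrow> nat" where
  "iota_C4 V E = (LEAST k. \<exists>D. C4_isolating V E D \<and> card D = k)"

end

theory Submission
  imports Defs
begin


definition nb :: "'a set \<Rightarrow> ('a \<Rightarrow> 'a \<Rightarrow> bool) \<Rightarrow> 'a \<Rightarrow> 'a set" where
  "nb V E v = {u \<in> V. E v u}"

definition gr :: "'a set \<Rightarrow> ('a \<Rightarrow> 'a \<Rightarrow> bool) \<Rightarrow> bool" where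
  "gr V E \<longleftrightarrow> finite V \<and> (\<forall>u v. E u v \<longrightarrow> E v u) \<and> (\<forall>v. \<not> E v v) \<and> (\<forall>v\<in>V. card (nb V E v) \<le> 3)"

definition cyc :: "'a set \<Rightarrow> ('a \<Rightarrow> 'a \<Rightarrow> bool) \<Rightarrow> 'a \<Rightarrow> 'a \<Rightarrow> 'a \<Rightarrow> 'a \<Rightarrow> bool" where
  "cyc S E a b c d \<longleftrightarrow> a \<in> S \<and> b \<in> S \<and> c \<in> S \<and> d \<in> S \<and> distinct [a,b,c,d] \<and> E a b \<and> E b c \<and> E c d \<and> E d a"

definition clo :: "'a set \<Rightarrow> ('a \<Rightarrow> 'a \<Rightarrow> bool) \<Rightarrow> 'a set \<Rightarrow> bool" where
  "clo V E S \<longleftrightarrow> (\<forall>s\<in>S. \<forall>z\<in>V. E s z \<longrightarrow> z \<in> S)"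

definition bad :: "'a set \<Rightarrow> ('a \<Rightarrow> 'a \<Rightarrow> bool) \<Rightarrow> 'a set \<Rightarrow> bool" where
  "bad V E S \<longleftrightarrow> S \<subseteq> V \<and> card S = 4 \<and> has_C4_subgraph S E \<and> clo V E S"

definition bc :: "'a set \<Rightarrow> ('a \<Rightarrow> 'a \<Rightarrow> bool) \<Rightarrow> nat" where
  "bc V E = card {S. bad V E S}"

definition valid :: "'a set \<Rightarrow> ('a \<Rightarrow> 'a \<Rightarrow> bool) \<Rightarrow> 'a \<Rightarrow> 'a set \<Rightarrow> bool" where
  "valid V E w Y \<longleftrightarrow> (\<forall>a b c d. cyc V E a b c d \<longrightarrow> {a,b,c,d} \<inter> Y \<noteq> {} \<longrightarrow>
      {a,b,c,d} \<inter> closed_nbhd V E {w} \<noteq> {})"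

definition ec :: "'a set \<Rightarrow> ('a \<Rightarrow> 'a \<Rightarrow> bool) \<Rightarrow> nat" where
  "ec V E = card {p \<in> V \<times> V. E (fst p) (snd p)}"

definition sqc :: "'a set \<Rightarrow> ('a \<Rightarrow> 'a \<Rightarrow> bool) \<Rightarrow> bool" where
  "sqc V E \<longleftrightarrow> (\<forall>u\<in>V. \<forall>v\<in>V. E u v \<longrightarrow> (\<exists>a\<in>V. \<exists>b\<in>V. distinct [u,v,a,b] \<and> E v a \<and> E a b \<and> E b u))"

lemma has_C4_cyc: "has_C4_subgraph S E \<longleftrightarrow> (\<exists>a b c d. cyc S E a b c d)"
  unfolding has_C4_subgraph_def cyc_def by blast

lemma cyc_mono: "cyc S E a b c d \<Longrightarrow> S \<subseteq> T \<Longrightarrow> cyc T E a b c d"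
  unfolding cyc_def by blast

lemma cyc_set: "cyc S E a b c d \<Longrightarrow> card S = 4 \<Longrightarrow> finite S \<Longrightarrow> S = {a,b,c,d}"
proof -
  assume c: "cyc S E a b c d" and "card S = 4" and f: "finite S"
  have sub: "{a,b,c,d} \<subseteq> S" using c unfolding cyc_def by auto
  have "card {a,b,c,d} = 4" using c unfolding cyc_def by auto
  then show ?thesis using sub \<open>card S = 4\<close> f by (metis card_subset_eq)
qed

lemma fin_bad: "finite V \<Longrightarrow> finite {S. bad V E S}"
  by (rule finite_subset[of _ "Pow V"]) (auto simp: bad_def)

lemma bad_fin: "bad V E S \<Longrightarrow> finite S"
  unfolding bad_def by (metis card.infinite zero_neq_numeral)

lemma bad_disj:
  assumes sym: "\<forall>u v. E u v \<longrightarrow> E v u"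
    and b1: "bad W E S1" and b2: "bad W E S2" and ne: "S1 \<noteq> S2"
  shows "S1 \<inter> S2 = {}"
proof (rule ccontr)
  assume "S1 \<inter> S2 \<noteq> {}"
  then obtain x where x1: "x \<in> S1" and x2: "x \<in> S2" by blast
  from b2 obtain a b c d where cy: "cyc S2 E a b c d" unfolding bad_def has_C4_cyc by blast
  have S2eq: "S2 = {a,b,c,d}" using cyc_set[OF cy] b2 bad_fin[OF b2] unfolding bad_def by blast
  have S2W: "S2 \<subseteq> W" using b2 unfolding bad_def by blast
  have cl: "\<And>s z. s \<in> S1 \<Longrightarrow> z \<in> W \<Longrightarrow> E s z \<Longrightarrow> z \<in> S1" using b1 unfolding bad_def clo_def by blast
  have inW: "a \<in> W" "b \<in> W" "c \<in> W" "d \<in> W" using S2eq S2W by auto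
  have e: "E a b" "E b c" "E c d" "E d a" "E b a" "E c b" "E d c" "E a d" using cy sym unfolding cyc_def by auto
  have "x = a \<or> x = b \<or> x = c \<or> x = d" using x2 S2eq by auto
  then have "a \<in> S1 \<and> b \<in> S1 \<and> c \<in> S1 \<and> d \<in> S1"
    using cl[OF _ inW(1)] cl[OF _ inW(2)] cl[OF _ inW(3)] cl[OF _ inW(4)] e x1 by metis
  then have "S2 \<subseteq> S1" using S2eq by auto
  then have "S2 = S1" using b1 b2 bad_fin[OF b1] unfolding bad_def by (metis card_subset_eq)
  then show False using ne by simp
qed

lemma bad_remove:
  assumes sym: "\<forall>u v. E u v \<longrightarrow> E v u" and bS: "bad V E S"
  shows "{T. bad (V - S) E T} = {T. bad V E T} - {S}"
proof (intro set_eqI iffI)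
  fix T assume "T \<in> {T. bad (V - S) E T}"
  then have bT: "bad (V - S) E T" by simp
  have TS: "T \<inter> S = {}" "T \<subseteq> V" using bT unfolding bad_def by auto
  have "clo V E T"
    unfolding clo_def
  proof (intro ballI impI)
    fix s z assume s: "s \<in> T" and z: "z \<in> V" and e: "E s z"
    show "z \<in> T"
    proof (cases "z \<in> S")
      case True
      then have "s \<in> S" using bS e sym s TS unfolding bad_def clo_def by blast
      then show ?thesis using s TS by blast
    next
      case False
      then show ?thesis using bT s z e unfolding bad_def clo_def by blast
    qed
  qed
  moreover have "T \<noteq> S" using TS bS unfolding bad_def by (metis card.empty inf.idem zero_neq_numeral)
  ultimately show "T \<in> {T. bad V E T} - {S}" using bT TS unfolding bad_def by auto
next
  fix T assume "T \<in> {T. bad V E T} - {S}"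
  then have bT: "bad V E T" and ne: "T \<noteq> S" by auto
  have "T \<inter> S = {}" using bad_disj[OF sym bT bS ne] .
  then show "T \<in> {T. bad (V - S) E T}" using bT unfolding bad_def clo_def by blast
qed

lemma bc_remove:
  assumes sym: "\<forall>u v. E u v \<longrightarrow> E v u" and bS: "bad V E S" and f: "finite V"
  shows "bc (V - S) E + 1 = bc V E"
proof -
  have "bc (V - S) E = card ({T. bad V E T} - {S})" unfolding bc_def using bad_remove[OF sym bS] by simp
  also have "\<dots> = bc V E - 1" unfolding bc_def using bS fin_bad[OF f] by (simp add: card_Diff_singleton)
  finally show ?thesis using bS fin_bad[OF f] unfolding bc_def
    by (metis Suc_eq_plus1 Suc_pred' card_gt_0_iff empty_iff mem_Collect_eq)
qed

lemma GR:
  assumes w: "w \<in> V" and va: "valid V E w Y" and iso: "C4_isolating (V - Y) E D"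
  shows "C4_isolating V E (insert w D)"
proof -
  have DV: "D \<subseteq> V" using iso unfolding C4_isolating_def by blast
  have sub1: "closed_nbhd V E {w} \<subseteq> closed_nbhd V E (insert w D)" unfolding closed_nbhd_def by blast
  have sub2: "closed_nbhd (V - Y) E D \<subseteq> closed_nbhd V E (insert w D)" unfolding closed_nbhd_def by blast
  have "\<not> has_C4_subgraph (V - closed_nbhd V E (insert w D)) E"
  proof
    assume "has_C4_subgraph (V - closed_nbhd V E (insert w D)) E"
    then obtain a b c d where cy: "cyc (V - closed_nbhd V E (insert w D)) E a b c d" unfolding has_C4_cyc by blast
    have cyV: "cyc V E a b c d" using cyc_mono[OF cy] by blast
    have out: "{a,b,c,d} \<inter> closed_nbhd V E (insert w D) = {}" using cy unfolding cyc_def by blast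
    show False
    proof (cases "{a,b,c,d} \<inter> Y = {}")
      case False
      then show False using va cyV out sub1 unfolding valid_def by blast
    next
      case True
      have "cyc ((V - Y) - closed_nbhd (V - Y) E D) E a b c d"
        using cyV True out sub2 unfolding cyc_def by blast
      then show False using iso unfolding C4_isolating_def has_C4_cyc by blast
    qed
  qed
  then show ?thesis unfolding C4_isolating_def using w DV by blast
qed

lemma gr_sub: "gr V E \<Longrightarrow> gr (V - Y) E"
proof -
  assume g: "gr V E"
  have "\<forall>v\<in>V - Y. card (nb (V - Y) E v) \<le> 3"
  proof
    fix v assume v: "v \<in> V - Y"
    have "nb (V - Y) E v \<subseteq> nb V E v" unfolding nb_def by blast
    moreover have "finite (nb V E v)" using g unfolding gr_def nb_def by auto
    ultimately have "card (nb (V - Y) E v) \<le> card (nb V E v)" by (rule card_mono[rotated])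
    then show "card (nb (V - Y) E v) \<le> 3" using g v unfolding gr_def by fastforce
  qed
  then show ?thesis using g unfolding gr_def by auto
qed

lemma ec_mono: "finite V \<Longrightarrow> W \<subseteq> V \<Longrightarrow> ec W E \<le> ec V E"
  unfolding ec_def by (rule card_mono) auto

lemma measure_dec: "finite V \<Longrightarrow> Y \<inter> V \<noteq> {} \<Longrightarrow> card (V - Y) + ec (V - Y) E < card V + ec V E"
proof -
  assume f: "finite V" and ne: "Y \<inter> V \<noteq> {}"
  have "card (V - Y) < card V" using f ne by (metis Diff_Diff_Int Diff_subset Int_commute card_Diff_subset_Int card_mono diff_less finite_Diff inf.absorb_iff2 le_neq_implies_less not_gr_zero psubsetI Diff_disjoint Int_absorb1 card_gt_0_iff psubset_card_mono inf_le2 subset_Diff_insert Diff_eq_empty_iff)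
  moreover have "ec (V - Y) E \<le> ec V E" using ec_mono[OF f] by blast
  ultimately show ?thesis by linarith
qed



definition exits :: "'a set \<Rightarrow> ('a \<Rightarrow> 'a \<Rightarrow> bool) \<Rightarrow> 'a set \<Rightarrow> ('a \<times> 'a) set" where
  "exits V E Y = {(y,z). y \<in> Y \<and> z \<in> V - Y \<and> E y z}"

definition into :: "('a \<Rightarrow> 'a \<Rightarrow> bool) \<Rightarrow> 'a set \<Rightarrow> 'a set \<Rightarrow> ('a \<times> 'a) set" where
  "into E Y S = {(y,z). y \<in> Y \<and> z \<in> S \<and> E y z}"

lemma CL:
  assumes g: "gr V E" and YV: "Y \<subseteq> V"
    and k: "\<And>S. bad (V - Y) E S \<Longrightarrow> k \<le> card (into E Y S)"
  shows "k * bc (V - Y) E \<le> card (exits V E Y)"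
proof -
  have sym: "\<forall>u v. E u v \<longrightarrow> E v u" and fV: "finite V" using g unfolding gr_def by auto
  let ?F = "{S. bad (V - Y) E S}"
  have fF: "finite ?F" using fin_bad fV by blast
  have fY: "finite Y" using YV fV finite_subset by blast
  have fX: "\<forall>S\<in>?F. finite (into E Y S)"
  proof
    fix S assume "S \<in> ?F"
    then have "into E Y S \<subseteq> Y \<times> S" unfolding into_def by auto
    moreover have "finite (Y \<times> S)" using fY bad_fin \<open>S \<in> ?F\<close> by blast
    ultimately show "finite (into E Y S)" using finite_subset by blast
  qed
  have dj: "\<forall>S\<in>?F. \<forall>T\<in>?F. S \<noteq> T \<longrightarrow> into E Y S \<inter> into E Y T = {}"
  proof (intro ballI impI)
    fix S T assume "S \<in> ?F" "T \<in> ?F" "S \<noteq> T"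
    then have "S \<inter> T = {}" using bad_disj[OF sym] by blast
    then show "into E Y S \<inter> into E Y T = {}" unfolding into_def by blast
  qed
  have "k * bc (V - Y) E = (\<Sum>S\<in>?F. k)" unfolding bc_def by simp
  also have "\<dots> \<le> (\<Sum>S\<in>?F. card (into E Y S))" using k by (intro sum_mono) auto
  also have "\<dots> = card (\<Union>S\<in>?F. into E Y S)" using card_UN_disjoint[OF fF fX dj] by simp
  also have "\<dots> \<le> card (exits V E Y)"
  proof (rule card_mono)
    have "exits V E Y \<subseteq> Y \<times> V" unfolding exits_def by auto
    then show "finite (exits V E Y)" using fY fV finite_subset by blast
    show "(\<Union>S\<in>?F. into E Y S) \<subseteq> exits V E Y" unfolding into_def exits_def bad_def by blast
  qed
  finally show ?thesis .
qed

lemma exit1: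
  assumes g: "gr V E" and nb0: "\<forall>S. \<not> bad V E S" and bS: "bad (V - Y) E S"
  shows "\<exists>y s. y \<in> Y \<and> y \<in> V \<and> s \<in> S \<and> E s y"
proof -
  have "\<not> clo V E S" using nb0 bS unfolding bad_def by blast
  then obtain s z where s: "s \<in> S" and z: "z \<in> V" and e: "E s z" and zn: "z \<notin> S"
    unfolding clo_def by blast
  have "z \<in> Y" using bS s z e zn unfolding bad_def clo_def by blast
  then show ?thesis using s z e by blast
qed

lemma exit2:
  assumes g: "gr V E" and YV: "Y \<subseteq> V" and sq: "sqc V E" and nb0: "\<forall>S. \<not> bad V E S" and bS: "bad (V - Y) E S"
  shows "2 \<le> card (into E Y S)"
proof -
  have sym: "\<forall>u v. E u v \<longrightarrow> E v u" and fV: "finite V" using g unfolding gr_def by auto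
  obtain z s where z: "z \<in> Y" "z \<in> V" and s: "s \<in> S" and e: "E s z" using exit1[OF g nb0 bS] by blast
  have SV: "S \<subseteq> V - Y" using bS unfolding bad_def by blast
  have cl: "\<And>x y. x \<in> S \<Longrightarrow> y \<in> V \<Longrightarrow> E x y \<Longrightarrow> y \<notin> S \<Longrightarrow> y \<in> Y"
    using bS unfolding bad_def clo_def by blast
  have sV: "s \<in> V" using s SV by blast
  obtain a b where a: "a \<in> V" and b: "b \<in> V" and di: "distinct [z,s,a,b]" and e1: "E s a" and e2: "E a b" and e3: "E b z"
    using sq z(2) sV sym e unfolding sqc_def by meson
  have zS: "z \<notin> S" using z SV by blast
  have p1: "(z, s) \<in> into E Y S" using z s e sym unfolding into_def by blast
  obtain p where p2: "p \<in> into E Y S" and pne: "p \<noteq> (z, s)"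
  proof (cases "a \<in> S")
    case False
    then have "a \<in> Y" using cl[OF s a e1] by blast
    then have "(a, s) \<in> into E Y S" using s e1 sym unfolding into_def by blast
    then show ?thesis using that di by auto
  next
    case aS: True
    show ?thesis
    proof (cases "b \<in> S")
      case False
      then have "b \<in> Y" using cl[OF aS b e2] by blast
      then have "(b, a) \<in> into E Y S" using aS e2 sym unfolding into_def by blast
      then show ?thesis using that di by auto
    next
      case True
      then have "(z, b) \<in> into E Y S" using z e3 sym unfolding into_def by blast
      then show ?thesis using that di by auto
    qed
  qed
  have fin: "finite (into E Y S)"
  proof -
    have "into E Y S \<subseteq> Y \<times> S" unfolding into_def by auto
    moreover have "finite (Y \<times> S)" using YV fV bad_fin[OF bS] finite_subset by blast
    ultimately show ?thesis using finite_subset by blast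
  qed
  have "{(z,s), p} \<subseteq> into E Y S" using p1 p2 by blast
  then have "card {(z,s), p} \<le> card (into E Y S)" using fin by (rule card_mono[rotated])
  then show ?thesis using pne by simp
qed



lemma cyc_prop:
  assumes sym: "\<forall>u v. E u v \<longrightarrow> E v u"
    and cl: "\<And>x y. x \<in> P \<Longrightarrow> y \<in> V \<Longrightarrow> E x y \<Longrightarrow> y \<noteq> t \<Longrightarrow> y \<in> P"
    and cy: "cyc V E a b c d" and nt: "t \<notin> {a,b,c,d}" and m: "{a,b,c,d} \<inter> P \<noteq> {}"
  shows "{a,b,c,d} \<subseteq> P"
proof -
  have inV: "a \<in> V" "b \<in> V" "c \<in> V" "d \<in> V" using cy unfolding cyc_def by auto
  have e: "E a b" "E b c" "E c d" "E d a" "E b a" "E c b" "E d c" "E a d" using cy sym unfolding cyc_def by auto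
  have nt': "a \<noteq> t" "b \<noteq> t" "c \<noteq> t" "d \<noteq> t" using nt by auto
  have A: "a \<in> P \<Longrightarrow> b \<in> P \<and> d \<in> P" using cl[OF _ inV(2) _ nt'(2)] cl[OF _ inV(4) _ nt'(4)] e by blast
  have B: "b \<in> P \<Longrightarrow> a \<in> P \<and> c \<in> P" using cl[OF _ inV(1) _ nt'(1)] cl[OF _ inV(3) _ nt'(3)] e by blast
  have C: "c \<in> P \<Longrightarrow> b \<in> P \<and> d \<in> P" using cl[OF _ inV(2) _ nt'(2)] cl[OF _ inV(4) _ nt'(4)] e by blast
  have D: "d \<in> P \<Longrightarrow> a \<in> P \<and> c \<in> P" using cl[OF _ inV(1) _ nt'(1)] cl[OF _ inV(3) _ nt'(3)] e by blast
  have "a \<in> P \<or> b \<in> P \<or> c \<in> P \<or> d \<in> P" using m by auto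
  then show ?thesis using A B C D by blast
qed

lemma pend_hit:
  assumes sym: "\<forall>u v. E u v \<longrightarrow> E v u"
    and PV: "P \<subseteq> V" and cP: "card P = 4" and fP: "finite P"
    and pe: "\<forall>p\<in>P. \<forall>z\<in>V. E p z \<longrightarrow> z \<in> P \<or> z = t"
    and ex: "\<exists>p\<in>P. E p t" and tV: "t \<in> V"
    and cy: "cyc V E a b c d" and m: "{a,b,c,d} \<inter> P \<noteq> {}"
  shows "{a,b,c,d} \<inter> closed_nbhd V E {t} \<noteq> {}"
proof (cases "t \<in> {a,b,c,d}")
  case True
  then show ?thesis unfolding closed_nbhd_def by blast
next
  case False
  have "{a,b,c,d} \<subseteq> P" using cyc_prop[OF sym _ cy False m] pe by blast
  moreover have "card {a,b,c,d} = 4" using cy unfolding cyc_def by auto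
  ultimately have eq: "{a,b,c,d} = P" using cP fP by (metis card_subset_eq)
  obtain p where "p \<in> P" "E p t" using ex by blast
  then have "p \<in> closed_nbhd V E {t}" using PV sym unfolding closed_nbhd_def by blast
  then show ?thesis using eq \<open>p \<in> P\<close> by blast
qed

lemma cyc_prop0:
  assumes sym: "\<forall>u v. E u v \<longrightarrow> E v u"
    and cl: "\<And>x y. x \<in> P \<Longrightarrow> y \<in> V \<Longrightarrow> E x y \<Longrightarrow> y \<in> P"
    and cy: "cyc V E a b c d" and m: "{a,b,c,d} \<inter> P \<noteq> {}"
  shows "{a,b,c,d} \<subseteq> P"
proof -
  have inV: "a \<in> V" "b \<in> V" "c \<in> V" "d \<in> V" using cy unfolding cyc_def by auto
  have e: "E a b" "E b c" "E c d" "E d a" "E b a" "E c b" "E d c" "E a d" using cy sym unfolding cyc_def by auto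
  have A: "a \<in> P \<Longrightarrow> b \<in> P \<and> d \<in> P" using cl[OF _ inV(2)] cl[OF _ inV(4)] e by blast
  have B: "b \<in> P \<Longrightarrow> a \<in> P \<and> c \<in> P" using cl[OF _ inV(1)] cl[OF _ inV(3)] e by blast
  have C: "c \<in> P \<Longrightarrow> b \<in> P \<and> d \<in> P" using cl[OF _ inV(2)] cl[OF _ inV(4)] e by blast
  have D: "d \<in> P \<Longrightarrow> a \<in> P \<and> c \<in> P" using cl[OF _ inV(1)] cl[OF _ inV(3)] e by blast
  have "a \<in> P \<or> b \<in> P \<or> c \<in> P \<or> d \<in> P" using m by auto
  then show ?thesis using A B C D by blast
qed

lemma bad_valid:
  assumes sym: "\<forall>u v. E u v \<longrightarrow> E v u" and bS: "bad V E S" and w: "w \<in> S"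
  shows "valid V E w S"
  unfolding valid_def
proof (intro allI impI)
  fix a b c d assume cy: "cyc V E a b c d" and m: "{a, b, c, d} \<inter> S \<noteq> {}"
  have "{a,b,c,d} \<subseteq> S" using cyc_prop0[OF sym _ cy m] bS unfolding bad_def clo_def by blast
  moreover have "card {a,b,c,d} = 4" using cy unfolding cyc_def by auto
  ultimately have eq: "{a,b,c,d} = S" using bS bad_fin[OF bS] unfolding bad_def by (metis card_subset_eq)
  have "w \<in> closed_nbhd V E {w}" unfolding closed_nbhd_def by blast
  then show "{a,b,c,d} \<inter> closed_nbhd V E {w} \<noteq> {}" using eq w by blast
qed

lemma R3:
  assumes g: "gr V E" and nb0: "\<forall>S. \<not> bad V E S"
    and SV: "S \<subseteq> V" and cS: "card S = 4" and hS: "has_C4_subgraph S E"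
    and tV: "t \<in> V" and tS: "t \<notin> S"
    and pe: "\<forall>s\<in>S. \<forall>z\<in>V. E s z \<longrightarrow> z \<in> S \<or> z = t"
  shows "\<exists>Y. Y \<subseteq> V \<and> valid V E t Y \<and> 5 \<le> card Y \<and> bc (V - Y) E = 0"
proof -
  have sym: "\<forall>u v. E u v \<longrightarrow> E v u" and fV: "finite V" using g unfolding gr_def by auto
  have fS: "finite S" using SV fV finite_subset by blast
  define W0 where "W0 = insert t S"
  define Bs where "Bs = \<Union>{B. bad (V - W0) E B}"
  define Y where "Y = W0 \<union> Bs"
  have exS: "\<exists>p\<in>S. E p t"
  proof -
    have "\<not> clo V E S" using nb0 SV cS hS unfolding bad_def by blast
    then obtain s z where "s \<in> S" "z \<in> V" "E s z" "z \<notin> S" unfolding clo_def by blast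
    then show ?thesis using pe by blast
  qed
  have Bprop: "\<forall>\<beta>\<in>B. \<forall>z\<in>V. E \<beta> z \<longrightarrow> z \<in> B \<or> z = t" if bB: "bad (V - W0) E B" for B
  proof (intro ballI impI)
    fix \<beta> z assume b: "\<beta> \<in> B" and z: "z \<in> V" and e: "E \<beta> z"
    have bW: "\<beta> \<in> V - W0" using bB b unfolding bad_def by blast
    show "z \<in> B \<or> z = t"
    proof (cases "z \<in> W0")
      case False
      then show ?thesis using bB b z e unfolding bad_def clo_def by blast
    next
      case True
      show ?thesis
      proof (cases "z = t")
        case False
        then have "z \<in> S" using True W0_def by blast
        then have "\<beta> \<in> S \<or> \<beta> = t" using pe sym e bW by blast
        then show ?thesis using bW W0_def by blast
      qed simp
    qed
  qed
  have Bex: "\<exists>p\<in>B. E p t" if bB: "bad (V - W0) E B" for B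
  proof -
    have "\<not> clo V E B" using nb0 bB unfolding bad_def by blast
    then obtain s z where "s \<in> B" "z \<in> V" "E s z" "z \<notin> B" unfolding clo_def by blast
    then show ?thesis using Bprop[OF bB] by blast
  qed
  have YV: "Y \<subseteq> V" unfolding Y_def W0_def Bs_def using SV tV by (auto simp: bad_def)
  have va: "valid V E t Y"
    unfolding valid_def
  proof (intro allI impI)
    fix a b c d assume cy: "cyc V E a b c d" and m: "{a, b, c, d} \<inter> Y \<noteq> {}"
    show "{a, b, c, d} \<inter> closed_nbhd V E {t} \<noteq> {}"
    proof (cases "{a,b,c,d} \<inter> S = {}")
      case False
      then show ?thesis using pend_hit[OF sym SV cS fS pe exS tV cy] by blast
    next
      case True
      show ?thesis
      proof (cases "t \<in> {a,b,c,d}")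
        case True
        then show ?thesis unfolding closed_nbhd_def by blast
      next
        case False
        then obtain B where bB: "bad (V - W0) E B" and mB: "{a,b,c,d} \<inter> B \<noteq> {}"
          using m True unfolding Y_def W0_def Bs_def by blast
        have "B \<subseteq> V" "card B = 4" "finite B" using bB bad_fin[OF bB] unfolding bad_def by auto
        then show ?thesis using pend_hit[OF sym _ _ _ Bprop[OF bB] Bex[OF bB] tV cy mB] by blast
      qed
    qed
  qed
  have bc0: "{B'. bad (V - Y) E B'} = {}"
  proof (rule ccontr)
    assume "{B'. bad (V - Y) E B'} \<noteq> {}"
    then obtain B' where bB': "bad (V - Y) E B'" by blast
    have B'sub: "B' \<subseteq> V - Y" using bB' unfolding bad_def by blast
    have "clo (V - W0) E B'"
      unfolding clo_def
    proof (intro ballI impI)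
      fix \<beta> z assume b: "\<beta> \<in> B'" and z: "z \<in> V - W0" and e: "E \<beta> z"
      show "z \<in> B'"
      proof (cases "z \<in> Y")
        case False
        then show ?thesis using bB' b z e unfolding bad_def clo_def by blast
      next
        case True
        then obtain B where bB: "bad (V - W0) E B" and zB: "z \<in> B" using z unfolding Y_def Bs_def by blast
        have "\<beta> \<in> B \<or> \<beta> = t" using Bprop[OF bB] zB sym e B'sub b by blast
        then have "\<beta> \<in> Y" using bB unfolding Y_def Bs_def W0_def by blast
        then show ?thesis using B'sub b by blast
      qed
    qed
    then have "bad (V - W0) E B'" using bB' unfolding bad_def Y_def by blast
    then have "B' \<subseteq> Y" unfolding Y_def Bs_def by blast
    moreover have "B' \<noteq> {}" using bB' unfolding bad_def by auto
    ultimately show False using B'sub by blast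
  qed
  have "card W0 = 5" unfolding W0_def using cS tS fS by simp
  moreover have "card W0 \<le> card Y" unfolding Y_def using YV fV
    by (metis Y_def card_mono finite_subset sup_ge1)
  ultimately have "5 \<le> card Y" by simp
  moreover have "bc (V - Y) E = 0" unfolding bc_def bc0 by simp
  ultimately show ?thesis using YV va by blast
qed

definition del :: "('a \<Rightarrow> 'a \<Rightarrow> bool) \<Rightarrow> 'a \<Rightarrow> 'a \<Rightarrow> 'a \<Rightarrow> 'a \<Rightarrow> bool" where
  "del E u v = (\<lambda>x y. E x y \<and> \<not> ((x = u \<and> y = v) \<or> (x = v \<and> y = u)))"

definition oncyc :: "'a set \<Rightarrow> ('a \<Rightarrow> 'a \<Rightarrow> bool) \<Rightarrow> 'a \<Rightarrow> 'a \<Rightarrow> bool" where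
  "oncyc V E u v \<longleftrightarrow> (\<exists>a\<in>V. \<exists>b\<in>V. distinct [u,v,a,b] \<and> E v a \<and> E a b \<and> E b u)"

lemma oncyc_sym: "\<forall>u v. E u v \<longrightarrow> E v u \<Longrightarrow> oncyc V E u v \<Longrightarrow> oncyc V E v u"
proof -
  assume sym: "\<forall>u v. E u v \<longrightarrow> E v u" and o: "oncyc V E u v"
  then obtain a b where "a \<in> V" "b \<in> V" "distinct [u,v,a,b]" "E v a" "E a b" "E b u" unfolding oncyc_def by blast
  then have "distinct [v,u,b,a]" "E u b" "E b a" "E a v" using sym by auto
  then show ?thesis unfolding oncyc_def using \<open>a \<in> V\<close> \<open>b \<in> V\<close> by blast
qed

lemma gr_del: "gr V E \<Longrightarrow> gr V (del E u v)"
proof -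
  assume g: "gr V E"
  have "\<forall>x\<in>V. card (nb V (del E u v) x) \<le> 3"
  proof
    fix x assume x: "x \<in> V"
    have "nb V (del E u v) x \<subseteq> nb V E x" unfolding nb_def del_def by blast
    moreover have "finite (nb V E x)" using g unfolding gr_def nb_def by auto
    ultimately have "card (nb V (del E u v) x) \<le> card (nb V E x)" by (rule card_mono[rotated])
    then show "card (nb V (del E u v) x) \<le> 3" using g x unfolding gr_def by fastforce
  qed
  moreover have "\<forall>x y. del E u v x y \<longrightarrow> del E u v y x" using g unfolding gr_def del_def by blast
  moreover have "\<forall>x. \<not> del E u v x x" using g unfolding gr_def del_def by blast
  ultimately show ?thesis using g unfolding gr_def by blast
qed

lemma ec_del: "finite V \<Longrightarrow> u \<in> V \<Longrightarrow> v \<in> V \<Longrightarrow> E u v \<Longrightarrow> ec V (del E u v) < ec V E"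
  unfolding ec_def
proof (rule psubset_card_mono)
  assume fV: "finite V"
  show "finite {p \<in> V \<times> V. E (fst p) (snd p)}" by (rule finite_subset[of _ "V \<times> V"]) (auto simp: fV)
next
  assume "u \<in> V" "v \<in> V" "E u v"
  then show "{p \<in> V \<times> V. del E u v (fst p) (snd p)} \<subset> {p \<in> V \<times> V. E (fst p) (snd p)}"
  proof -
    have "(u,v) \<in> {p \<in> V \<times> V. E (fst p) (snd p)}" using \<open>u \<in> V\<close> \<open>v \<in> V\<close> \<open>E u v\<close> by simp
    moreover have "(u,v) \<notin> {p \<in> V \<times> V. del E u v (fst p) (snd p)}" unfolding del_def by simp
    moreover have "{p \<in> V \<times> V. del E u v (fst p) (snd p)} \<subseteq> {p \<in> V \<times> V. E (fst p) (snd p)}" unfolding del_def by auto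
    ultimately show ?thesis by blast
  qed
qed

lemma cyc_del:
  assumes sym: "\<forall>u v. E u v \<longrightarrow> E v u" and n: "\<not> oncyc V E u v" and cy: "cyc S E a b c d" and SV: "S \<subseteq> V"
  shows "cyc S (del E u v) a b c d"
proof -
  have n2: "\<not> oncyc V E v u" using n oncyc_sym[OF sym] by blast
  have inV: "a \<in> V" "b \<in> V" "c \<in> V" "d \<in> V" using cy SV unfolding cyc_def by auto
  have e: "E a b" "E b c" "E c d" "E d a" "E b a" "E c b" "E d c" "E a d" using cy sym unfolding cyc_def by auto
  have di: "distinct [a,b,c,d]" using cy unfolding cyc_def by auto
  have nn: "\<And>p q r s. p \<in> V \<Longrightarrow> q \<in> V \<Longrightarrow> r \<in> V \<Longrightarrow> s \<in> V \<Longrightarrow> distinct [p,q,r,s] \<Longrightarrow> E q r \<Longrightarrow> E r s \<Longrightarrow> E s p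
      \<Longrightarrow> \<not> ((p = u \<and> q = v) \<or> (p = v \<and> q = u))"
  proof
    fix p q r s assume pV: "p \<in> V" "q \<in> V" "r \<in> V" "s \<in> V" and dd: "distinct [p,q,r,s]"
      and ee: "E q r" "E r s" "E s p" and h: "(p = u \<and> q = v) \<or> (p = v \<and> q = u)"
    show False
    proof (cases "p = u \<and> q = v")
      case True
      then have "oncyc V E u v" unfolding oncyc_def using pV dd ee by blast
      then show False using n by blast
    next
      case False
      then have "p = v \<and> q = u" using h by blast
      then have "oncyc V E v u" unfolding oncyc_def using pV dd ee by blast
      then show False using n2 by blast
    qed
  qed
  have d1: "del E u v a b" unfolding del_def using e nn[of a b c d] inV di by auto
  have d2: "del E u v b c" unfolding del_def using e nn[of b c d a] inV di by auto
  have d3: "del E u v c d" unfolding del_def using e nn[of c d a b] inV di by auto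
  have d4: "del E u v d a" unfolding del_def using e nn[of d a b c] inV di by auto
  show ?thesis using cy d1 d2 d3 d4 unfolding cyc_def by blast
qed

lemma iso_del:
  assumes sym: "\<forall>u v. E u v \<longrightarrow> E v u" and n: "\<not> oncyc V E u v"
    and iso: "C4_isolating V (del E u v) D"
  shows "C4_isolating V E D"
proof -
  have "closed_nbhd V (del E u v) D \<subseteq> closed_nbhd V E D" unfolding closed_nbhd_def del_def by blast
  moreover have "\<not> has_C4_subgraph (V - closed_nbhd V E D) E"
  proof
    assume "has_C4_subgraph (V - closed_nbhd V E D) E"
    then obtain a b c d where cy: "cyc (V - closed_nbhd V E D) E a b c d" unfolding has_C4_cyc by blast
    have "cyc (V - closed_nbhd V E D) (del E u v) a b c d" using cyc_del[OF sym n cy] by blast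
    moreover have "V - closed_nbhd V E D \<subseteq> V - closed_nbhd V (del E u v) D"
      unfolding closed_nbhd_def del_def by blast
    ultimately have "cyc (V - closed_nbhd V (del E u v) D) (del E u v) a b c d" by (rule cyc_mono)
    then show False using iso unfolding C4_isolating_def has_C4_cyc by blast
  qed
  ultimately show ?thesis using iso unfolding C4_isolating_def by blast
qed

lemma bad_del:
  assumes sym: "\<forall>u v. E u v \<longrightarrow> E v u" and nb0: "\<forall>S. \<not> bad V E S"
    and np: "\<forall>S t. S \<subseteq> V \<longrightarrow> card S = 4 \<longrightarrow> has_C4_subgraph S E \<longrightarrow> t \<in> V \<longrightarrow> t \<notin> S \<longrightarrow>
        \<not> (\<forall>s\<in>S. \<forall>z\<in>V. E s z \<longrightarrow> z \<in> S \<or> z = t)"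
  shows "\<forall>S. \<not> bad V (del E u v) S"
proof (intro allI notI)
  fix S assume bS: "bad V (del E u v) S"
  have SV: "S \<subseteq> V" and cS: "card S = 4" using bS unfolding bad_def by auto
  have hS: "has_C4_subgraph S E" using bS unfolding bad_def has_C4_subgraph_def del_def by blast
  have "\<not> clo V E S" using nb0 SV cS hS unfolding bad_def by blast
  then obtain s z where s: "s \<in> S" and z: "z \<in> V" and e: "E s z" and zS: "z \<notin> S" unfolding clo_def by blast
  have cld: "\<And>x y. x \<in> S \<Longrightarrow> y \<in> V \<Longrightarrow> del E u v x y \<Longrightarrow> y \<in> S" using bS unfolding bad_def clo_def by blast
  have uv: "(s = u \<and> z = v) \<or> (s = v \<and> z = u)" using cld[OF s z] e zS unfolding del_def by blast
  have "\<forall>s'\<in>S. \<forall>z'\<in>V. E s' z' \<longrightarrow> z' \<in> S \<or> z' = z"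
  proof (intro ballI impI)
    fix s' z' assume s': "s' \<in> S" and z': "z' \<in> V" and e': "E s' z'"
    show "z' \<in> S \<or> z' = z"
    proof (cases "z' \<in> S")
      case False
      then have "(s' = u \<and> z' = v) \<or> (s' = v \<and> z' = u)" using cld[OF s' z'] e' unfolding del_def by blast
      then show ?thesis using uv s s' zS False by blast
    qed simp
  qed
  then show False using np SV cS hS z zS by blast
qed



lemma nb_fin: "finite V \<Longrightarrow> finite (nb V E x)" unfolding nb_def by simp

lemma three_nbrs:
  assumes fV: "finite V" and c: "card (nb V E x) \<le> 3" and ab: "a \<in> nb V E x" "b \<in> nb V E x" "c \<in> nb V E x"
    and d: "distinct [a,b,c]"
  shows "nb V E x = {a,b,c}"
proof -
  have "{a,b,c} \<subseteq> nb V E x" using ab by blast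
  moreover have "card {a,b,c} = 3" using d by simp
  ultimately show ?thesis using c nb_fin[OF fV] by (metis card_seteq)
qed

lemma no_four_nbrs:
  assumes fV: "finite V" and c: "card (nb V E x) \<le> 3"
    and ab: "a \<in> nb V E x" "b \<in> nb V E x" "c \<in> nb V E x" "d \<in> nb V E x"
    and di: "distinct [a,b,c,d]"
  shows False
proof -
  have "{a,b,c,d} \<subseteq> nb V E x" using ab by blast
  moreover have "card {a,b,c,d} = 4" using di by simp
  ultimately have "4 \<le> card (nb V E x)" using nb_fin[OF fV] by (metis card_mono)
  then show False using c by simp
qed

lemma third_nbr:
  assumes fV: "finite V" and c: "card (nb V E x) = 3"
  shows "\<exists>t\<in>nb V E x. t \<noteq> a \<and> t \<noteq> b"
proof (rule ccontr)
  assume "\<not> ?thesis"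
  then have "nb V E x \<subseteq> {a,b}" by blast
  then have "card (nb V E x) \<le> card {a,b}" by (rule card_mono[rotated]) simp
  also have "\<dots> \<le> 2" by (simp add: card_insert_if)
  finally show False using c by simp
qed

lemma in_nb: "y \<in> nb V E x \<longleftrightarrow> y \<in> V \<and> E x y" unfolding nb_def by simp

lemma sum_deg_split:
  assumes fV: "finite V" and YV: "Y \<subseteq> V"
  shows "(\<Sum>y\<in>Y. card (nb V E y)) = card (exits V E Y) + card {(y,z). y \<in> Y \<and> z \<in> Y \<and> E y z}"
proof -
  have fY: "finite Y" using fV YV finite_subset by blast
  have "(\<Sum>y\<in>Y. card (nb V E y)) = card (SIGMA y:Y. nb V E y)" using fY nb_fin[OF fV] by simp
  also have "(SIGMA y:Y. nb V E y) = exits V E Y \<union> {(y,z). y \<in> Y \<and> z \<in> Y \<and> E y z}"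
    unfolding exits_def nb_def using YV by auto
  also have "card \<dots> = card (exits V E Y) + card {(y,z). y \<in> Y \<and> z \<in> Y \<and> E y z}"
  proof (rule card_Un_disjoint)
    show "finite (exits V E Y)" by (rule finite_subset[of _ "Y \<times> V"]) (auto simp: exits_def fY fV)
    show "finite {(y,z). y \<in> Y \<and> z \<in> Y \<and> E y z}" by (rule finite_subset[of _ "Y \<times> Y"]) (auto simp: fY)
    show "exits V E Y \<inter> {(y,z). y \<in> Y \<and> z \<in> Y \<and> E y z} = {}" unfolding exits_def by auto
  qed
  finally show ?thesis .
qed

lemma sum_deg_le:
  assumes fY: "finite Y" and d: "\<forall>y\<in>Y. f y \<le> (3::nat)" and y0: "y0 \<in> Y" "f y0 \<le> 2"
  shows "(\<Sum>y\<in>Y. f y) + 1 \<le> 3 * card Y"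
proof -
  have "(\<Sum>y\<in>Y. f y) = f y0 + (\<Sum>y\<in>Y - {y0}. f y)" using fY y0 by (simp add: sum.remove)
  also have "(\<Sum>y\<in>Y - {y0}. f y) \<le> 3 * card (Y - {y0})" using d sum_bounded_above[of "Y - {y0}" f 3] by auto
  finally have "(\<Sum>y\<in>Y. f y) \<le> 2 + 3 * card (Y - {y0})" using y0 by linarith
  moreover have "card (Y - {y0}) + 1 = card Y" using fY y0 by (simp add: card_Diff_singleton) (metis Suc_pred card_gt_0_iff empty_iff)
  ultimately show ?thesis by linarith
qed

lemma sum_deg_le3:
  assumes d: "\<forall>y\<in>Y. f y \<le> (3::nat)"
  shows "(\<Sum>y\<in>Y. f y) \<le> 3 * card Y"
  using sum_bounded_above[of Y f 3] d by auto

lemma diamond_false: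
  assumes g: "gr V E" and sq: "sqc V E"
    and prp: "\<forall>u\<in>V. \<forall>v\<in>V. E u v \<longrightarrow> card (nb V E u) = 3 \<longrightarrow> card (nb V E v) = 3"
    and V: "p \<in> V" "q \<in> V" "r \<in> V" "s \<in> V" and di: "distinct [p,q,r,s]"
    and e: "E p q" "E q r" "E r s" "E s p" "E p r" and nqs: "\<not> E q s"
    and dp: "card (nb V E p) = 3"
  shows False
proof -
  have sym: "\<And>u v. E u v \<Longrightarrow> E v u" and irr: "\<And>v. \<not> E v v" and fV: "finite V"
    and deg: "\<And>x. x \<in> V \<Longrightarrow> card (nb V E x) \<le> 3" using g unfolding gr_def by blast+
  have dq: "card (nb V E q) = 3" using prp V e dp by blast
  have dr: "card (nb V E r) = 3" using prp V e dq by blast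
  have nbp: "nb V E p = {q,r,s}" using three_nbrs[OF fV deg[OF V(1)], of q r s] V e sym di by (auto simp: in_nb)
  have nbr: "nb V E r = {p,q,s}" using three_nbrs[OF fV deg[OF V(3)], of p q s] V e sym di by (auto simp: in_nb)
  obtain t where tq: "t \<in> nb V E q" and tp: "t \<noteq> p" and tr: "t \<noteq> r" using third_nbr[OF fV dq] by blast
  have tV: "t \<in> V" and eqt: "E q t" using tq by (auto simp: in_nb)
  have ts: "t \<noteq> s" using eqt nqs by blast
  have tqq: "t \<noteq> q" using eqt irr by blast
  have nbq: "nb V E q = {p,r,t}" using three_nbrs[OF fV deg[OF V(2)], of p r t] V e sym tq tp tr di by (auto simp: in_nb)
  obtain a b where ab: "a \<in> V" "b \<in> V" "distinct [q,t,a,b]" "E t a" "E a b" "E b q"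
    using sq V(2) tV eqt unfolding sqc_def by blast
  have "b \<in> nb V E q" using ab sym by (auto simp: in_nb)
  then have bpr: "b = p \<or> b = r" using nbq ab by auto
  have "a \<in> nb V E b" using ab sym by (auto simp: in_nb)
  then have "a = r \<or> a = s \<or> a = p" using bpr nbp nbr ab by auto
  moreover have "a \<noteq> r"
  proof
    assume "a = r"
    then have "t \<in> nb V E r" using ab tV sym by (auto simp: in_nb)
    then show False using nbr tp tqq ts by auto
  qed
  moreover have "a \<noteq> p"
  proof
    assume "a = p"
    then have "t \<in> nb V E p" using ab tV sym by (auto simp: in_nb)
    then show False using nbp tqq tr ts by auto
  qed
  ultimately have "a = s" by blast
  then have ets: "E t s" using ab by simp
  have nbs: "nb V E s = {p,r,t}" using three_nbrs[OF fV deg[OF V(4)], of p r t] V e sym ets tV tp tr di by (auto simp: in_nb)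
  have dt: "card (nb V E t) = 3" using prp V tV eqt dq by blast
  obtain z where zt: "z \<in> nb V E t" and zq: "z \<noteq> q" and zs: "z \<noteq> s" using third_nbr[OF fV dt] by blast
  have zV: "z \<in> V" and etz: "E t z" using zt by (auto simp: in_nb)
  have nbt: "nb V E t = {q,s,z}" using three_nbrs[OF fV deg[OF tV], of q s z] V eqt ets sym zt zq zs di by (auto simp: in_nb)
  obtain a' b' where ab': "a' \<in> V" "b' \<in> V" "distinct [t,z,a',b']" "E z a'" "E a' b'" "E b' t"
    using sq tV zV etz unfolding sqc_def by blast
  have "b' \<in> nb V E t" using ab' sym by (auto simp: in_nb)
  then have bqs: "b' = q \<or> b' = s" using nbt ab' by auto
  have "a' \<in> nb V E b'" using ab' sym by (auto simp: in_nb)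
  then have apr: "a' = p \<or> a' = r" using bqs nbq nbs ab' by auto
  have "z \<in> nb V E a'" using ab' zV sym by (auto simp: in_nb)
  then have "z = r \<or> z = p" using apr nbp nbr zq zs by auto
  then have "t \<in> nb V E r \<or> t \<in> nb V E p" using etz sym tV by (auto simp: in_nb)
  then show False using nbp nbr tp tr ts tqq by auto
qed

lemma exit4:
  assumes g: "gr V E" and sq: "sqc V E" and nb0: "\<forall>S. \<not> bad V E S"
    and prp: "\<forall>u\<in>V. \<forall>v\<in>V. E u v \<longrightarrow> card (nb V E u) = 3 \<longrightarrow> card (nb V E v) = 3"
    and YV: "Y \<subseteq> V" and Y3: "\<forall>y\<in>Y. card (nb V E y) = 3" and bS: "bad (V - Y) E S"
  shows "4 \<le> card (into E Y S)"
proof -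
  have sym: "\<And>u v. E u v \<Longrightarrow> E v u" and irr: "\<And>v. \<not> E v v" and fV: "finite V"
    and deg: "\<And>x. x \<in> V \<Longrightarrow> card (nb V E x) \<le> 3" using g unfolding gr_def by blast+
  obtain a b c d where cy: "cyc S E a b c d" using bS unfolding bad_def has_C4_cyc by blast
  have Seq: "S = {a,b,c,d}" using cyc_set[OF cy] bS bad_fin[OF bS] unfolding bad_def by blast
  have SV: "S \<subseteq> V - Y" using bS unfolding bad_def by blast
  have V: "a \<in> V" "b \<in> V" "c \<in> V" "d \<in> V" using Seq SV by auto
  have di: "distinct [a,b,c,d]" and e: "E a b" "E b c" "E c d" "E d a" using cy unfolding cyc_def by auto
  have e': "E b a" "E c b" "E d c" "E a d" using e sym by auto
  have dnq: "a \<noteq> b" "a \<noteq> c" "a \<noteq> d" "b \<noteq> c" "b \<noteq> d" "c \<noteq> d" using di by auto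
  obtain y s where ys: "y \<in> Y" "y \<in> V" "s \<in> S" "E s y" using exit1[OF g nb0 bS] by blast
  have sV: "s \<in> V" using ys SV by blast
  have ds: "card (nb V E s) = 3" using prp ys(2) sV sym[OF ys(4)] Y3 ys(1) by blast
  have ab: "card (nb V E a) = 3 \<Longrightarrow> card (nb V E b) = 3" using prp V(1,2) e(1) by blast
  have bc: "card (nb V E b) = 3 \<Longrightarrow> card (nb V E c) = 3" using prp V(2,3) e(2) by blast
  have cd: "card (nb V E c) = 3 \<Longrightarrow> card (nb V E d) = 3" using prp V(3,4) e(3) by blast
  have da': "card (nb V E d) = 3 \<Longrightarrow> card (nb V E a) = 3" using prp V(4,1) e(4) by blast
  have da: "card (nb V E a) = 3"
  proof -
    have "s = a \<or> s = b \<or> s = c \<or> s = d" using ys Seq by blast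
    then show ?thesis using ds ab bc cd da' by blast
  qed
  have db: "card (nb V E b) = 3" using ab da by blast
  have dc: "card (nb V E c) = 3" using bc db by blast
  have dd: "card (nb V E d) = 3" using cd dc by blast
  have cl: "\<And>x z. x \<in> S \<Longrightarrow> z \<in> V \<Longrightarrow> E x z \<Longrightarrow> z \<notin> S \<Longrightarrow> z \<in> Y"
    using bS unfolding bad_def clo_def by blast
  have fin: "finite (into E Y S)"
    by (rule finite_subset[of _ "Y \<times> S"]) (auto simp: into_def bad_fin[OF bS] finite_subset[OF YV fV])
  consider (k) "E a c" "E b d" | (ac) "E a c" "\<not> E b d" | (bd) "\<not> E a c" "E b d" | (n) "\<not> E a c" "\<not> E b d" by blast
  then show ?thesis
  proof cases
    case k
    have k': "E c a" "E d b" using k sym by auto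
    have na: "nb V E a = {b,c,d}" by (rule three_nbrs[OF fV deg[OF V(1)]]) (use V e e' k k' dnq in \<open>simp_all add: in_nb\<close>)
    have nbb: "nb V E b = {a,c,d}" by (rule three_nbrs[OF fV deg[OF V(2)]]) (use V e e' k k' dnq in \<open>simp_all add: in_nb\<close>)
    have nc: "nb V E c = {a,b,d}" by (rule three_nbrs[OF fV deg[OF V(3)]]) (use V e e' k k' dnq in \<open>simp_all add: in_nb\<close>)
    have nd: "nb V E d = {a,b,c}" by (rule three_nbrs[OF fV deg[OF V(4)]]) (use V e e' k k' dnq in \<open>simp_all add: in_nb\<close>)
    have "clo V E S" unfolding clo_def
    proof (intro ballI impI)
      fix x z assume x: "x \<in> S" and z: "z \<in> V" and exz: "E x z"
      have "z \<in> nb V E x" using z exz by (simp add: in_nb)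
      then show "z \<in> S" using x na nbb nc nd unfolding Seq by blast
    qed
    then have "bad V E S" using bS SV unfolding bad_def by blast
    then show ?thesis using nb0 by blast
  next
    case ac
    have "\<not> E b d" using ac by blast
    then show ?thesis using diamond_false[OF g sq prp V(1-4) di e(1-4) ac(1) _ da] by blast
  next
    case bd
    have di2: "distinct [b,c,d,a]" using di by auto
    have "\<not> E c a" using bd sym by blast
    then show ?thesis using diamond_false[OF g sq prp V(2,3,4,1) di2 e(2,3,4,1) bd(2) _ db] by blast
  next
    case n
    have n': "\<not> E c a" "\<not> E d b" using n sym by blast+
    obtain ta where ta: "ta \<in> nb V E a" "ta \<noteq> b" "ta \<noteq> d" using third_nbr[OF fV da] by blast
    obtain tb where tb: "tb \<in> nb V E b" "tb \<noteq> a" "tb \<noteq> c" using third_nbr[OF fV db] by blast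
    obtain tc where tc: "tc \<in> nb V E c" "tc \<noteq> b" "tc \<noteq> d" using third_nbr[OF fV dc] by blast
    obtain td where td: "td \<in> nb V E d" "td \<noteq> a" "td \<noteq> c" using third_nbr[OF fV dd] by blast
    have ta': "ta \<in> V" "E a ta" using ta(1) by (simp_all add: in_nb)
    have tb': "tb \<in> V" "E b tb" using tb(1) by (simp_all add: in_nb)
    have tc': "tc \<in> V" "E c tc" using tc(1) by (simp_all add: in_nb)
    have td': "td \<in> V" "E d td" using td(1) by (simp_all add: in_nb)
    have "ta \<noteq> a" "ta \<noteq> c" using ta' irr n by blast+
    then have "ta \<notin> S" using ta unfolding Seq by blast
    then have "ta \<in> Y" using cl[of a ta] Seq ta' by blast
    then have pa: "(ta, a) \<in> into E Y S" using ta' Seq sym by (simp add: into_def)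
    have "tb \<noteq> b" "tb \<noteq> d" using tb' irr n by blast+
    then have "tb \<notin> S" using tb unfolding Seq by blast
    then have "tb \<in> Y" using cl[of b tb] Seq tb' by blast
    then have pb: "(tb, b) \<in> into E Y S" using tb' Seq sym by (simp add: into_def)
    have "tc \<noteq> c" "tc \<noteq> a" using tc' irr n' by blast+
    then have "tc \<notin> S" using tc unfolding Seq by blast
    then have "tc \<in> Y" using cl[of c tc] Seq tc' by blast
    then have pc: "(tc, c) \<in> into E Y S" using tc' Seq sym by (simp add: into_def)
    have "td \<noteq> d" "td \<noteq> b" using td' irr n' by blast+
    then have "td \<notin> S" using td unfolding Seq by blast
    then have "td \<in> Y" using cl[of d td] Seq td' by blast
    then have pd: "(td, d) \<in> into E Y S" using td' Seq sym by (simp add: into_def)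
    have sub: "{(ta,a),(tb,b),(tc,c),(td,d)} \<subseteq> into E Y S" using pa pb pc pd by blast
    have "card {(ta,a),(tb,b),(tc,c),(td,d)} = 4" using dnq by simp
    then show ?thesis using card_mono[OF fin sub] by simp
  qed
qed

locale K =
  fixes V :: "'a set" and E :: "'a \<Rightarrow> 'a \<Rightarrow> bool" and w :: 'a
  assumes g: "gr V E" and sq: "sqc V E" and nb0: "\<forall>S. \<not> bad V E S"
    and wV: "w \<in> V" and d3: "card (nb V E w) = 3"
begin

definition N where "N = nb V E w"
definition T where "T = {c \<in> V. c \<notin> insert w N \<and> 2 \<le> card (nb V E c \<inter> N)}"
definition Y where "Y = insert w N \<union> T"

lemma sym: "E u v \<Longrightarrow> E v u" using g unfolding gr_def by blast
lemma irr: "\<not> E v v" using g unfolding gr_def by blast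
lemma fV: "finite V" using g unfolding gr_def by blast
lemma deg: "x \<in> V \<Longrightarrow> card (nb V E x) \<le> 3" using g unfolding gr_def by blast

lemma NV: "N \<subseteq> V" unfolding N_def nb_def by blast
lemma wN: "w \<notin> N" unfolding N_def nb_def using irr by blast
lemma fN: "finite N" using NV fV finite_subset by blast
lemma cN: "card N = 3" using d3 unfolding N_def .
lemma YV: "Y \<subseteq> V" unfolding Y_def T_def using NV wV by blast
lemma fY: "finite Y" using YV fV finite_subset by blast
lemma fT: "finite T" unfolding T_def using fV by simp
lemma TN: "T \<inter> insert w N = {}" unfolding T_def by blast

lemma cardY: "card Y = 4 + card T"
proof -
  have "card (insert w N) = 4" using wN fN cN by simp
  moreover have "card Y = card (insert w N) + card T"
    unfolding Y_def using TN fN fT by (intro card_Un_disjoint) auto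
  ultimately show ?thesis by simp
qed

lemma T_hit:
  assumes y: "y \<in> T" and pq: "p \<noteq> q" "p \<in> V" "q \<in> V" "E y p" "E y q"
  shows "p \<in> N \<or> q \<in> N"
proof (rule ccontr)
  assume nn: "\<not> (p \<in> N \<or> q \<in> N)"
  have yV: "y \<in> V" and two: "2 \<le> card (nb V E y \<inter> N)" using y unfolding T_def by auto
  have sub: "{p,q} \<union> (nb V E y \<inter> N) \<subseteq> nb V E y" using pq unfolding nb_def by auto
  have "card ({p,q} \<union> (nb V E y \<inter> N)) = card {p,q} + card (nb V E y \<inter> N)"
    using nn fN by (intro card_Un_disjoint) auto
  then have "4 \<le> card ({p,q} \<union> (nb V E y \<inter> N))" using two pq by simp
  also have "\<dots> \<le> card (nb V E y)" using sub nb_fin[OF fV] by (rule card_mono[rotated])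
  finally show False using deg[OF yV] by simp
qed

lemma N_closed: "N \<subseteq> closed_nbhd V E {w}" unfolding N_def nb_def closed_nbhd_def by blast
lemma w_closed: "w \<in> closed_nbhd V E {w}" unfolding closed_nbhd_def by blast

lemma hit_a: "cyc V E a b c d \<Longrightarrow> a \<in> Y \<Longrightarrow> {a,b,c,d} \<inter> closed_nbhd V E {w} \<noteq> {}"
proof -
  assume cy: "cyc V E a b c d" and a: "a \<in> Y"
  show ?thesis
  proof (cases "a \<in> insert w N")
    case True
    then show ?thesis using N_closed w_closed by blast
  next
    case False
    then have aT: "a \<in> T" using a unfolding Y_def by blast
    have "b \<noteq> d" "b \<in> V" "d \<in> V" "E a b" "E a d" using cy sym unfolding cyc_def by auto
    then have "b \<in> N \<or> d \<in> N" using T_hit[OF aT] by blast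
    then show ?thesis using N_closed by blast
  qed
qed

lemma cyc_rot: "cyc V E a b c d \<Longrightarrow> cyc V E b c d a" unfolding cyc_def by auto

lemma valid: "valid V E w Y"
  unfolding valid_def
proof (intro allI impI)
  fix a b c d assume cy: "cyc V E a b c d" and m: "{a,b,c,d} \<inter> Y \<noteq> {}"
  have c2: "cyc V E b c d a" and c3: "cyc V E c d a b" and c4: "cyc V E d a b c" using cy cyc_rot by blast+
  have "a \<in> Y \<or> b \<in> Y \<or> c \<in> Y \<or> d \<in> Y" using m by blast
  then show "{a,b,c,d} \<inter> closed_nbhd V E {w} \<noteq> {}"
  proof (elim disjE)
    assume "a \<in> Y" then show ?thesis using hit_a[OF cy] by blast
  next
    assume "b \<in> Y" then have "{b,c,d,a} \<inter> closed_nbhd V E {w} \<noteq> {}" using hit_a[OF c2] by blast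
    then show ?thesis by (simp add: insert_commute)
  next
    assume "c \<in> Y" then have "{c,d,a,b} \<inter> closed_nbhd V E {w} \<noteq> {}" using hit_a[OF c3] by blast
    then show ?thesis by (simp add: insert_commute)
  next
    assume "d \<in> Y" then have "{d,a,b,c} \<inter> closed_nbhd V E {w} \<noteq> {}" using hit_a[OF c4] by blast
    then show ?thesis by (simp add: insert_commute)
  qed
qed

lemma int_lb: "6 + 4 * card T \<le> card {(y,z). y \<in> Y \<and> z \<in> Y \<and> E y z}"
proof -
  let ?I = "{(y,z). y \<in> Y \<and> z \<in> Y \<and> E y z}"
  let ?A = "Pair w ` N"
  let ?B = "(\<lambda>x. (x,w)) ` N"
  let ?P2 = "SIGMA c:T. (nb V E c \<inter> N)"
  let ?P3 = "(\<lambda>(a,b). (b,a)) ` ?P2"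
  have fI: "finite ?I" by (rule finite_subset[of _ "Y \<times> Y"]) (auto simp: fY)
  have cA: "card ?A = 3" using cN by (simp add: card_image inj_on_def)
  have cB: "card ?B = 3" using cN by (simp add: card_image inj_on_def)
  have cP2: "2 * card T \<le> card ?P2"
  proof -
    have "card ?P2 = (\<Sum>c\<in>T. card (nb V E c \<inter> N))" using fT fN by simp
    moreover have "card T * 2 \<le> (\<Sum>c\<in>T. card (nb V E c \<inter> N))"
      using sum_bounded_below[of T 2 "\<lambda>c. card (nb V E c \<inter> N)"] unfolding T_def by auto
    ultimately show ?thesis by linarith
  qed
  have cP3: "card ?P3 = card ?P2" by (rule card_image) (auto simp: inj_on_def)
  have fA: "finite ?A" "finite ?B" "finite ?P2" "finite ?P3" using fN fT by auto
  have dAB: "?A \<inter> ?B = {}" using wN by auto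
  have d2: "(?A \<union> ?B) \<inter> ?P2 = {}" using TN by auto
  have d3: "(?A \<union> ?B \<union> ?P2) \<inter> ?P3 = {}" using TN by auto
  have sub: "?A \<union> ?B \<union> ?P2 \<union> ?P3 \<subseteq> ?I"
    unfolding Y_def N_def nb_def using sym by auto
  have "card (?A \<union> ?B \<union> ?P2 \<union> ?P3) = card ?A + card ?B + card ?P2 + card ?P3"
    using fA dAB d2 d3 by (simp add: card_Un_disjoint)
  moreover have "card (?A \<union> ?B \<union> ?P2 \<union> ?P3) \<le> card ?I" using sub fI by (rule card_mono[rotated])
  ultimately show ?thesis using cA cB cP2 cP3 by linarith
qed

lemma N3: "\<exists>x1 x2 x3. N = {x1,x2,x3} \<and> x1 \<noteq> x2 \<and> x2 \<noteq> x3 \<and> x1 \<noteq> x3"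
  using cN card_3_iff by metis

lemma inN: "x \<in> N \<longleftrightarrow> x \<in> V \<and> E w x" unfolding N_def nb_def by simp

lemma sq_w: "x \<in> N \<Longrightarrow> \<exists>a b. a \<in> V \<and> b \<in> V \<and> distinct [w,x,a,b] \<and> E x a \<and> E a b \<and> E b w"
  using sq wV unfolding sqc_def inN by blast

lemma opp_in:
  assumes "x \<in> N" "b \<in> N" "x \<noteq> b" "a \<in> V" "a \<notin> insert w N" "E x a" "E a b"
  shows "a \<in> T"
proof -
  have "{x,b} \<subseteq> nb V E a \<inter> N" using assms sym NV unfolding nb_def by auto
  then have "card {x,b} \<le> card (nb V E a \<inter> N)" using fN by (intro card_mono) auto
  then have "2 \<le> card (nb V E a \<inter> N)" using assms(3) by simp
  then show ?thesis unfolding T_def using assms by blast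
qed

lemma sq_w': "x \<in> N \<Longrightarrow> \<exists>a b. a \<in> V \<and> b \<in> N \<and> a \<noteq> w \<and> a \<noteq> x \<and> a \<noteq> b \<and> b \<noteq> x \<and> E x a \<and> E a b \<and> (a \<in> N \<or> a \<in> T)"
proof -
  assume x: "x \<in> N"
  obtain a b where ab: "a \<in> V" "b \<in> V" "distinct [w,x,a,b]" "E x a" "E a b" "E b w" using sq_w[OF x] by blast
  have bN: "b \<in> N" using ab sym unfolding inN by blast
  have "a \<in> N \<or> a \<in> T"
  proof (cases "a \<in> N")
    case False
    then have "a \<notin> insert w N" using ab by auto
    then show ?thesis using opp_in[OF x bN _ ab(1) _ ab(4) ab(5)] ab by auto
  qed simp
  then show ?thesis using ab bN by auto
qed

lemma t0: "card T = 0 \<Longrightarrow> False"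
proof -
  assume "card T = 0"
  then have T0: "T = {}" using fT by simp
  obtain x1 x2 x3 where Ne: "N = {x1,x2,x3}" and d: "x1 \<noteq> x2" "x2 \<noteq> x3" "x1 \<noteq> x3" using N3 by blast
  have h: "\<exists>a\<in>N. \<exists>b\<in>N. a \<noteq> x \<and> a \<noteq> b \<and> b \<noteq> x \<and> E x a \<and> E a b" if x: "x \<in> N" for x
    using sq_w'[OF x] T0 by blast
  have e23: "E x2 x3" using h[of x1] Ne d sym by auto
  have e13: "E x1 x3" using h[of x2] Ne d sym by auto
  have e12: "E x1 x2" using h[of x3] Ne d sym by auto
  have xV: "x1 \<in> V" "x2 \<in> V" "x3 \<in> V" using NV Ne by auto
  have wx: "E w x1" "E w x2" "E w x3" using Ne inN by auto
  have n1: "nb V E x1 = {w,x2,x3}" using three_nbrs[OF fV deg[OF xV(1)], of w x2 x3] wV xV wx e12 e13 d wN Ne sym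
    by (auto simp: in_nb)
  have n2: "nb V E x2 = {w,x1,x3}" using three_nbrs[OF fV deg[OF xV(2)], of w x1 x3] wV xV wx e12 e23 d wN Ne sym
    by (auto simp: in_nb)
  have n3: "nb V E x3 = {w,x1,x2}" using three_nbrs[OF fV deg[OF xV(3)], of w x1 x2] wV xV wx e13 e23 d wN Ne sym
    by (auto simp: in_nb)
  let ?S = "{w,x1,x2,x3}"
  have "cyc ?S E w x1 x2 x3" unfolding cyc_def using wx e12 e23 sym d wN Ne by auto
  then have h4: "has_C4_subgraph ?S E" unfolding has_C4_cyc by blast
  have c4: "card ?S = 4" using d wN Ne by auto
  have cl: "clo V E ?S" unfolding clo_def
  proof (intro ballI impI)
    fix s z assume s: "s \<in> ?S" and z: "z \<in> V" and e: "E s z"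
    have "z \<in> nb V E s" using z e by (simp add: in_nb)
    then show "z \<in> ?S" using s n1 n2 n3 Ne N_def by auto
  qed
  have "bad V E ?S" unfolding bad_def using h4 c4 cl wV xV by auto
  then show False using nb0 by blast
qed

lemma t1: "card T = 1 \<Longrightarrow> 5 + bc (V - Y) E \<le> card Y"
proof -
  assume "card T = 1"
  then obtain c where Tc: "T = {c}" using card_1_singletonE by blast
  have cT: "c \<in> T" using Tc by simp
  have cV: "c \<in> V" and cn: "c \<notin> insert w N" and c2: "2 \<le> card (nb V E c \<inter> N)" using cT unfolding T_def by auto
  have allc: "E c x" if x: "x \<in> N" for x
  proof -
    obtain a b where ab: "a \<in> V" "b \<in> N" "a \<noteq> w" "a \<noteq> x" "a \<noteq> b" "b \<noteq> x" "E x a" "E a b" "a \<in> N \<or> a \<in> T"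
      using sq_w'[OF x] by blast
    show "E c x"
    proof (cases "a \<in> T")
      case True
      then show ?thesis using Tc ab sym by auto
    next
      case False
      then have aN: "a \<in> N" using ab by blast
      show ?thesis
      proof (rule ccontr)
        assume nc: "\<not> E c x"
        have Nxab: "N = {x,a,b}"
        proof -
          have sub: "{x,a,b} \<subseteq> N" using x aN ab by auto
          have "card {x,a,b} = 3" using ab by auto
          then show ?thesis using card_seteq[OF fN sub] cN by simp
        qed
        have sub2: "nb V E c \<inter> N \<subseteq> {a,b}" using Nxab nc by (auto simp: in_nb)
        have "card {a,b} = 2" using ab by auto
        then have "nb V E c \<inter> N = {a,b}" using card_seteq[OF _ sub2] c2 by simp
        then have eca: "E c a" "E c b" by (auto simp: in_nb)
        have "w \<in> nb V E a" "x \<in> nb V E a" "b \<in> nb V E a" "c \<in> nb V E a"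
          using wV cV x aN ab NV eca sym by (auto simp: in_nb inN)
        moreover have "distinct [w,x,b,c]" using ab cn x wN by auto
        ultimately show False using no_four_nbrs[OF fV deg[OF ab(1)]] by blast
      qed
    qed
  qed
  have nbc: "nb V E c = N"
  proof -
    obtain x1 x2 x3 where Ne: "N = {x1,x2,x3}" and d: "x1 \<noteq> x2" "x2 \<noteq> x3" "x1 \<noteq> x3" using N3 by blast
    have "x1 \<in> nb V E c" "x2 \<in> nb V E c" "x3 \<in> nb V E c" using allc Ne NV by (auto simp: in_nb)
    then have "nb V E c = {x1,x2,x3}" using three_nbrs[OF fV deg[OF cV]] d by auto
    then show ?thesis using Ne by simp
  qed
  have Yeq: "Y = insert c (insert w N)" unfolding Y_def Tc by auto
  have ex0: "exits V E Y = {}"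
  proof (rule ccontr)
    assume "exits V E Y \<noteq> {}"
    then obtain y z where y: "y \<in> Y" and z: "z \<in> V" "z \<notin> Y" and e: "E y z" unfolding exits_def by blast
    have "y \<noteq> w" using z e inN Y_def by auto
    moreover have "y \<noteq> c" using z e nbc Yeq by (auto simp: in_nb)
    ultimately have yN: "y \<in> N" using y Yeq by auto
    have yV: "y \<in> V" using yN NV by auto
    have zn: "z \<noteq> w" "z \<noteq> c" "z \<notin> N" using z Yeq by auto
    have nby: "nb V E y = {w,c,z}"
      using three_nbrs[OF fV deg[OF yV], of w c z] wV cV z e yN allc sym zn cn by (auto simp: in_nb inN)
    obtain a b where ab: "a \<in> V" "b \<in> V" "distinct [y,z,a,b]" "E z a" "E a b" "E b y"
      using sq yV z(1) e unfolding sqc_def by blast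
    have "b \<in> nb V E y" using ab sym by (auto simp: in_nb)
    then have "b = w \<or> b = c" using nby ab by auto
    then have aN: "a \<in> N" using ab nbc sym by (auto simp: inN in_nb)
    have "z \<in> T" using opp_in[OF yN aN _ z(1) _ e] ab sym zn by auto
    then show False using Tc zn by auto
  qed
  have "1 * bc (V - Y) E \<le> card (exits V E Y)"
  proof (rule CL[OF g YV])
    fix S assume bS: "bad (V - Y) E S"
    obtain y s where "y \<in> Y" "y \<in> V" "s \<in> S" "E s y" using exit1[OF g nb0 bS] by blast
    then have "(y,s) \<in> into E Y S" unfolding into_def using sym by auto
    moreover have "finite (into E Y S)"
      by (rule finite_subset[of _ "Y \<times> S"]) (auto simp: into_def fY bad_fin[OF bS])
    ultimately show "1 \<le> card (into E Y S)" by (metis One_nat_def Suc_leI card_gt_0_iff empty_iff)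
  qed
  then have "bc (V - Y) E = 0" using ex0 by simp
  then show ?thesis using cardY Tc by simp
qed

end



lemma arith1: "2 * (b::nat) + t \<le> 5 \<Longrightarrow> 2 \<le> t \<Longrightarrow> 5 + b \<le> 4 + t" by presburger
lemma arith2: "4 * (b::nat) + t \<le> 6 \<Longrightarrow> 2 \<le> t \<Longrightarrow> 5 + b \<le> 4 + t" by presburger

context K begin

lemma count_gen:
  assumes t2: "2 \<le> card T" and kb: "k * bc (V - Y) E \<le> card (exits V E Y)"
    and sd: "(\<Sum>y\<in>Y. card (nb V E y)) + df \<le> 3 * card Y"
    and kd: "(k = 2 \<and> df = 1) \<or> (k = 4 \<and> df = 0)"
  shows "5 + bc (V - Y) E \<le> card Y"
proof -
  have s1: "(\<Sum>y\<in>Y. card (nb V E y)) = card (exits V E Y) + card {(y,z). y \<in> Y \<and> z \<in> Y \<and> E y z}"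
    using sum_deg_split[OF fV YV] .
  have s2: "6 + 4 * card T \<le> card {(y,z). y \<in> Y \<and> z \<in> Y \<and> E y z}" using int_lb .
  have s3: "card Y = 4 + card T" using cardY .
  show ?thesis using kd
  proof (elim disjE conjE)
    assume "k = 2" "df = 1"
    then have kb': "2 * bc (V - Y) E \<le> card (exits V E Y)" and sd': "(\<Sum>y\<in>Y. card (nb V E y)) + 1 \<le> 3 * card Y"
      using kb sd by simp_all
    then have "2 * bc (V - Y) E + card T \<le> 5" using s1 s2 s3 by linarith
    then show ?thesis using arith1 t2 s3 by simp
  next
    assume "k = 4" "df = 0"
    then have kb': "4 * bc (V - Y) E \<le> card (exits V E Y)" and sd': "(\<Sum>y\<in>Y. card (nb V E y)) \<le> 3 * card Y"
      using kb sd by simp_all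
    then have "4 * bc (V - Y) E + card T \<le> 6" using s1 s2 s3 by linarith
    then show ?thesis using arith2 t2 s3 by simp
  qed
qed

lemma tA:
  assumes t2: "2 \<le> card T" and x: "x \<in> N" and dx: "card (nb V E x) \<le> 2"
  shows "5 + bc (V - Y) E \<le> card Y"
proof -
  have "2 * bc (V - Y) E \<le> card (exits V E Y)"
    using CL[OF g YV] exit2[OF g YV sq nb0] by blast
  moreover have "(\<Sum>y\<in>Y. card (nb V E y)) + 1 \<le> 3 * card Y"
  proof (rule sum_deg_le[OF fY])
    show "\<forall>y\<in>Y. card (nb V E y) \<le> 3" using YV deg by blast
    show "x \<in> Y" using x unfolding Y_def by blast
  qed (rule dx)
  ultimately show ?thesis using count_gen[OF t2, of 2 1] by simp
qed

lemma tB: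
  assumes t2: "2 \<le> card T"
    and prp: "\<forall>u\<in>V. \<forall>v\<in>V. E u v \<longrightarrow> card (nb V E u) = 3 \<longrightarrow> card (nb V E v) = 3"
  shows "5 + bc (V - Y) E \<le> card Y"
proof -
  have N3': "\<forall>x\<in>N. card (nb V E x) = 3" using prp wV d3 NV inN by blast
  have T3: "\<forall>c\<in>T. card (nb V E c) = 3"
  proof
    fix c assume c: "c \<in> T"
    then have "2 \<le> card (nb V E c \<inter> N)" unfolding T_def by blast
    then obtain x where "x \<in> nb V E c \<inter> N" by (metis card.empty ex_in_conv not_numeral_le_zero)
    then have "x \<in> N" "E c x" "c \<in> V" using c unfolding T_def by (auto simp: in_nb)
    then show "card (nb V E c) = 3" using prp N3' NV sym by blast
  qed
  have Y3: "\<forall>y\<in>Y. card (nb V E y) = 3" using d3 N3' T3 unfolding Y_def by blast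
  have "4 * bc (V - Y) E \<le> card (exits V E Y)"
    using CL[OF g YV] exit4[OF g sq nb0 prp YV Y3] by blast
  moreover have "(\<Sum>y\<in>Y. card (nb V E y)) + 0 \<le> 3 * card Y" using sum_deg_le3[of Y] Y3 by simp
  ultimately show ?thesis using count_gen[OF t2, of 4 0] by simp
qed

lemma result:
  assumes "(\<exists>x\<in>N. card (nb V E x) \<le> 2) \<or> (\<forall>u\<in>V. \<forall>v\<in>V. E u v \<longrightarrow> card (nb V E u) = 3 \<longrightarrow> card (nb V E v) = 3)"
  shows "Y \<subseteq> V \<and> valid V E w Y \<and> 5 + bc (V - Y) E \<le> card Y"
proof -
  have "5 + bc (V - Y) E \<le> card Y"
  proof (cases "card T = 0")
    case True then show ?thesis using t0 by blast
  next
    case F0: False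
    show ?thesis
    proof (cases "card T = 1")
      case True then show ?thesis using t1 by blast
    next
      case False
      then have "2 \<le> card T" using F0 by linarith
      then show ?thesis using assms tA tB by blast
    qed
  qed
  then show ?thesis using YV valid by blast
qed

end

lemma two_nbrs:
  assumes fV: "finite V" and c: "card (nb V E x) \<le> 2" and ab: "a \<in> nb V E x" "b \<in> nb V E x" and d: "a \<noteq> b"
  shows "nb V E x = {a,b}"
proof -
  have "{a,b} \<subseteq> nb V E x" using ab by blast
  moreover have "card {a,b} = 2" using d by simp
  ultimately show ?thesis using c nb_fin[OF fV] by (metis card_seteq)
qed

lemma key:
  assumes g: "gr V E" and sq: "sqc V E" and nb0: "\<forall>S. \<not> bad V E S" and h: "has_C4_subgraph V E"
  shows "\<exists>w Y. w \<in> V \<and> Y \<subseteq> V \<and> valid V E w Y \<and> 5 + bc (V - Y) E \<le> card Y"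
proof -
  have sym: "\<And>u v. E u v \<Longrightarrow> E v u" and fV: "finite V"
    and deg: "\<And>x. x \<in> V \<Longrightarrow> card (nb V E x) \<le> 3" using g unfolding gr_def by blast+
  show ?thesis
  proof (cases "\<exists>u\<in>V. \<exists>v\<in>V. E u v \<and> card (nb V E u) = 3 \<and> card (nb V E v) \<le> 2")
    case True
    then obtain u v where uV: "u \<in> V" and vV: "v \<in> V" and e: "E u v" and du: "card (nb V E u) = 3"
      and dv: "card (nb V E v) \<le> 2" by blast
    interpret kk: K V E u by (rule K.intro) (use g sq nb0 uV du in auto)
    have "v \<in> kk.N" unfolding kk.N_def using vV e by (simp add: in_nb)
    then show ?thesis using kk.result dv uV by blast
  next
    case nA: False
    show ?thesis
    proof (cases "\<exists>w\<in>V. card (nb V E w) = 3")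
      case True
      then obtain w where wV: "w \<in> V" and dw: "card (nb V E w) = 3" by blast
      interpret kk: K V E w by (rule K.intro) (use g sq nb0 wV dw in auto)
      have "\<forall>u\<in>V. \<forall>v\<in>V. E u v \<longrightarrow> card (nb V E u) = 3 \<longrightarrow> card (nb V E v) = 3"
      proof (intro ballI impI)
        fix u v assume "u \<in> V" "v \<in> V" "E u v" "card (nb V E u) = 3"
        then have "\<not> card (nb V E v) \<le> 2" using nA by blast
        then show "card (nb V E v) = 3" using deg[OF \<open>v \<in> V\<close>] by linarith
      qed
      then show ?thesis using kk.result wV by blast
    next
      case False
      have d2: "card (nb V E x) \<le> 2" if x: "x \<in> V" for x
        using False deg[OF x] x by (metis le_antisym not_less_eq_eq numeral_3_eq_3 numeral_2_eq_2)
      obtain a b c d where cy: "cyc V E a b c d" using h unfolding has_C4_cyc by blast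
      have V: "a \<in> V" "b \<in> V" "c \<in> V" "d \<in> V" and di: "distinct [a,b,c,d]"
        and e: "E a b" "E b c" "E c d" "E d a" using cy unfolding cyc_def by auto
      have "nb V E a = {b,d}" using two_nbrs[OF fV d2[OF V(1)], of b d] V e sym di by (auto simp: in_nb)
      moreover have "nb V E b = {a,c}" using two_nbrs[OF fV d2[OF V(2)], of a c] V e sym di by (auto simp: in_nb)
      moreover have "nb V E c = {b,d}" using two_nbrs[OF fV d2[OF V(3)], of b d] V e sym di by (auto simp: in_nb)
      moreover have "nb V E d = {a,c}" using two_nbrs[OF fV d2[OF V(4)], of a c] V e sym di by (auto simp: in_nb)
      ultimately have cl: "clo V E {a,b,c,d}" unfolding clo_def by (auto simp: in_nb)
      have "cyc {a,b,c,d} E a b c d" using cy unfolding cyc_def by auto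
      then have "has_C4_subgraph {a,b,c,d} E" unfolding has_C4_cyc by blast
      moreover have "card {a,b,c,d} = 4" using di by auto
      ultimately have "bad V E {a,b,c,d}" using cl V unfolding bad_def by auto
      then show ?thesis using nb0 by blast
    qed
  qed
qed



lemma step:
  assumes g: "gr V E" and w: "w \<in> V" and YV: "Y \<subseteq> V" and va: "valid V E w Y"
    and iso: "C4_isolating (V - Y) E D" and le: "5 * card D \<le> card (V - Y) + bc (V - Y) E"
  shows "C4_isolating V E (insert w D) \<and> 5 * card (insert w D) + card Y \<le> 5 + card V + bc (V - Y) E"
proof -
  have fV: "finite V" using g unfolding gr_def by auto
  have DV: "D \<subseteq> V" using iso unfolding C4_isolating_def by blast
  have fD: "finite D" using DV fV finite_subset by blast
  have c1: "card (insert w D) \<le> card D + 1" using fD by (simp add: card_insert_if)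
  have c2: "card (V - Y) + card Y = card V" using YV fV by (metis card_Diff_subset finite_subset le_add_diff_inverse2 card_mono)
  show ?thesis using GR[OF w va iso] c1 c2 le by linarith
qed

theorem main:
  "gr V E \<Longrightarrow> \<exists>D. C4_isolating V E D \<and> 5 * card D \<le> card V + bc V E"
proof (induction "card V + ec V E" arbitrary: V E rule: less_induct)
  case less
  have g: "gr V E" by fact
  have sym: "\<forall>u v. E u v \<longrightarrow> E v u" and fV: "finite V" using g unfolding gr_def by auto
  note IH = less(1)
  have IHsub: "\<exists>D. C4_isolating (V - Y) E D \<and> 5 * card D \<le> card (V - Y) + bc (V - Y) E"
    if "Y \<subseteq> V" "Y \<noteq> {}" for Y
  proof -
    have "Y \<inter> V \<noteq> {}" using that by blast
    then show ?thesis using IH[OF measure_dec[OF fV] gr_sub[OF g]] by blast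
  qed
  show ?case
  proof (cases "has_C4_subgraph V E")
    case False
    have "C4_isolating V E {}" using False unfolding C4_isolating_def closed_nbhd_def by simp
    then show ?thesis by force
  next
    case hC4: True
    show ?thesis
    proof (cases "\<exists>S. bad V E S")
      case True
      then obtain S where bS: "bad V E S" by blast
      have SV: "S \<subseteq> V" and cS: "card S = 4" using bS unfolding bad_def by auto
      then obtain w where w: "w \<in> S" by fastforce
      obtain D where iso: "C4_isolating (V - S) E D" and le: "5 * card D \<le> card (V - S) + bc (V - S) E"
        using IHsub[OF SV] cS by fastforce
      have wV: "w \<in> V" using w SV by blast
      have A: "C4_isolating V E (insert w D) \<and> 5 * card (insert w D) + card S \<le> 5 + card V + bc (V - S) E"
        using step[OF g wV SV bad_valid[OF sym bS w] iso le] .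
      have B: "bc (V - S) E + 1 = bc V E" using bc_remove[OF sym bS fV] .
      have "5 * card (insert w D) \<le> card V + bc V E" using A B cS by linarith
      then show ?thesis using A by blast
    next
      case nb: False
      then have nb0: "\<forall>S. \<not> bad V E S" by blast
      have e0: "{S. bad V E S} = {}" using nb0 by blast
      have bc0: "bc V E = 0" by (simp only: bc_def e0 card.empty)
      show ?thesis
      proof (cases "\<exists>S t. S \<subseteq> V \<and> card S = 4 \<and> has_C4_subgraph S E \<and> t \<in> V \<and> t \<notin> S \<and>
          (\<forall>s\<in>S. \<forall>z\<in>V. E s z \<longrightarrow> z \<in> S \<or> z = t)")
        case True
        then obtain S t where SV: "S \<subseteq> V" and cS: "card S = 4" and hS: "has_C4_subgraph S E"
          and tV: "t \<in> V" and tS: "t \<notin> S" and pe: "\<forall>s\<in>S. \<forall>z\<in>V. E s z \<longrightarrow> z \<in> S \<or> z = t" by blast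
        obtain Y where YV: "Y \<subseteq> V" and va: "valid V E t Y" and c5: "5 \<le> card Y" and b0: "bc (V - Y) E = 0"
          using R3[OF g nb0 SV cS hS tV tS pe] by blast
        have "Y \<noteq> {}" using c5 by auto
        then obtain D where iso: "C4_isolating (V - Y) E D" and le: "5 * card D \<le> card (V - Y) + bc (V - Y) E"
          using IHsub[OF YV] by blast
        have "C4_isolating V E (insert t D) \<and> 5 * card (insert t D) + card Y \<le> 5 + card V + bc (V - Y) E"
          using step[OF g tV YV va iso le] .
        then have "5 * card (insert t D) \<le> card V + bc V E" using c5 b0 bc0 by linarith
        then show ?thesis using \<open>C4_isolating V E (insert t D) \<and> _\<close> by blast
      next
        case np: False
        show ?thesis
        proof (cases "\<exists>u\<in>V. \<exists>v\<in>V. E u v \<and> \<not> oncyc V E u v")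
          case True
          then obtain u v where uV: "u \<in> V" and vV: "v \<in> V" and e: "E u v" and n: "\<not> oncyc V E u v" by blast
          have "card V + ec V (del E u v) < card V + ec V E" using ec_del[of V u v E, OF fV uV vV e] by simp
          then obtain D where iso: "C4_isolating V (del E u v) D" and le: "5 * card D \<le> card V + bc V (del E u v)"
            using IH[OF _ gr_del[OF g]] by blast
          have "\<forall>S. \<not> bad V (del E u v) S" using bad_del[OF sym nb0] np by blast
          then have e1: "{S. bad V (del E u v) S} = {}" by blast
          have "bc V (del E u v) = 0" by (simp only: bc_def e1 card.empty)
          then show ?thesis using iso_del[OF sym n iso] le bc0 by auto
        next
          case False
          then have sq: "sqc V E" unfolding sqc_def oncyc_def by blast
          obtain w Y where w: "w \<in> V" and YV: "Y \<subseteq> V" and va: "valid V E w Y" and c5: "5 + bc (V - Y) E \<le> card Y"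
            using key[OF g sq nb0 hC4] by blast
          have "Y \<noteq> {}" using c5 by auto
          then obtain D where iso: "C4_isolating (V - Y) E D" and le: "5 * card D \<le> card (V - Y) + bc (V - Y) E"
            using IHsub[OF YV] by blast
          have "C4_isolating V E (insert w D) \<and> 5 * card (insert w D) + card Y \<le> 5 + card V + bc (V - Y) E"
            using step[OF g w YV va iso le] .
          then have "5 * card (insert w D) \<le> card V + bc V E" using c5 bc0 by linarith
          then show ?thesis using \<open>C4_isolating V E (insert w D) \<and> _\<close> by blast
        qed
      qed
    qed
  qed
qed



lemma C4e: "C4_edges i j \<longleftrightarrow> (i,j) \<in> {(1,2),(2,1),(2,3),(3,2),(3,4),(4,3),(4,1),(1,4)}"
  unfolding C4_edges_def by (auto simp: doubleton_eq_iff)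

lemma Dme: "diamond_edges i j \<longleftrightarrow> (i,j) \<in> {(1,2),(2,1),(2,3),(3,2),(3,4),(4,3),(4,1),(1,4),(1,3),(3,1)}"
  unfolding diamond_edges_def by (auto simp: doubleton_eq_iff)

lemma iso_gen:
  assumes di: "distinct [a,b,c,d]" and V: "V = {a,b,c,d}"
    and sym: "\<forall>u v. E u v \<longrightarrow> E v u" and irr: "\<forall>v. \<not> E v v"
    and F: "\<And>u v. u \<in> V \<Longrightarrow> v \<in> V \<Longrightarrow> E u v \<longleftrightarrow>
      F ((\<lambda>x. if x = a then 1 else if x = b then 2 else if x = c then 3 else 4::nat) u)
        ((\<lambda>x. if x = a then 1 else if x = b then 2 else if x = c then 3 else 4::nat) v)"
  shows "graph_iso V E {1..4::nat} F"
proof -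
  let ?f = "(\<lambda>x. if x = a then 1 else if x = b then 2 else if x = c then 3 else 4::nat)"
  have "bij_betw ?f V {1..4}"
    unfolding bij_betw_def inj_on_def V using di by (auto simp: atLeastAtMost_iff)
  then show ?thesis unfolding graph_iso_def using F by blast
qed

lemma four_iso:
  assumes cy: "cyc V E a b c d" and V: "V = {a,b,c,d}"
    and sym: "\<forall>u v. E u v \<longrightarrow> E v u" and irr: "\<forall>v. \<not> E v v"
  shows "graph_iso V E {1..4::nat} C4_edges \<or> graph_iso V E {1..4::nat} diamond_edges \<or> graph_iso V E {1..4::nat} K4_edges"
proof -
  have di: "distinct [a,b,c,d]" and e: "E a b" "E b c" "E c d" "E d a" using cy unfolding cyc_def by auto
  have e': "E b a" "E c b" "E d c" "E a d" using e sym by auto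
  have ir: "\<not> E a a" "\<not> E b b" "\<not> E c c" "\<not> E d d" using irr by auto
  consider (n) "\<not> E a c" "\<not> E b d" | (ac) "E a c" "\<not> E b d" | (bd) "\<not> E a c" "E b d" | (k) "E a c" "E b d" by blast
  then show ?thesis
  proof cases
    case n
    then have n': "\<not> E c a" "\<not> E d b" using sym by auto
    have "graph_iso V E {1..4::nat} C4_edges"
      by (rule iso_gen[OF di V sym irr]) (use di e e' ir n n' in \<open>auto simp: V C4e\<close>)
    then show ?thesis by blast
  next
    case ac
    then have n': "E c a" "\<not> E d b" using sym by auto
    have "graph_iso V E {1..4::nat} diamond_edges"
      by (rule iso_gen[OF di V sym irr]) (use di e e' ir ac n' in \<open>auto simp: V Dme\<close>)
    then show ?thesis by blast
  next
    case bd
    then have n': "\<not> E c a" "E d b" using sym by auto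
    have di2: "distinct [b,c,d,a]" using di by auto
    have V2: "V = {b,c,d,a}" using V by auto
    have "graph_iso V E {1..4::nat} diamond_edges"
      by (rule iso_gen[OF di2 V2 sym irr]) (use di e e' ir bd n' in \<open>auto simp: V Dme\<close>)
    then show ?thesis by blast
  next
    case k
    then have n': "E c a" "E d b" using sym by auto
    have "graph_iso V E {1..4::nat} K4_edges"
      by (rule iso_gen[OF di V sym irr]) (use di e e' ir k n' in \<open>auto simp: V K4_edges_def\<close>)
    then show ?thesis by blast
  qed
qed

lemma conn_closed:
  assumes c: "connected_graph V E" and SV: "S \<subseteq> V" and ne: "S \<noteq> {}" and cl: "clo V E S"
  shows "S = V"
proof -
  obtain s where s: "s \<in> S" using ne by blast
  have "v \<in> S" if v: "v \<in> V" for v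
  proof -
    have r: "(\<lambda>x y. E x y \<and> x \<in> V \<and> y \<in> V)\<^sup>*\<^sup>* s v" using c s SV v unfolding connected_graph_def by blast
    show ?thesis using r
    proof (induction rule: rtranclp_induct)
      case base then show ?case using s .
    next
      case (step y z) then show ?case using cl unfolding clo_def by blast
    qed
  qed
  then show ?thesis using SV by blast
qed

theorem theorem3:
  fixes V :: "'a set" and E :: "'a \<Rightarrow> 'a \<Rightarrow> bool"
  assumes "simple_graph V E"
    and "connected_graph V E"
    and "max_degree_le V E 3"
    and "\<not> graph_iso V E {1..4::nat} C4_edges"
    and "\<not> graph_iso V E {1..4::nat} diamond_edges"
    and "\<not> graph_iso V E {1..4::nat} K4_edges"
  shows "iota_C4 V E \<le> card V div 5"
proof -
  have sym: "\<forall>u v. E u v \<longrightarrow> E v u" and irr: "\<forall>v. \<not> E v v" and fV: "finite V"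
    using assms(1) unfolding simple_graph_def by auto
  have g: "gr V E" using assms(1,3) unfolding gr_def simple_graph_def max_degree_le_def degree_def nb_def by auto
  obtain D where iso: "C4_isolating V E D" and le: "5 * card D \<le> card V + bc V E" using main[OF g] by blast
  have nb0: "\<forall>S. \<not> bad V E S"
  proof (intro allI notI)
    fix S assume bS: "bad V E S"
    have "S \<noteq> {}" using bS unfolding bad_def by auto
    then have SV: "S = V" using conn_closed[OF assms(2)] bS unfolding bad_def by blast
    obtain a b c d where cy: "cyc S E a b c d" using bS unfolding bad_def has_C4_cyc by blast
    have "S = {a,b,c,d}" using cyc_set[OF cy] bS bad_fin[OF bS] unfolding bad_def by blast
    then show False using four_iso[OF _ _ sym irr, of V a b c d] cy SV assms(4,5,6) by blast
  qed
  have e0: "{S. bad V E S} = {}" using nb0 by blast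
  have bc0: "bc V E = 0" by (simp only: bc_def e0 card.empty)
  have "iota_C4 V E \<le> card D" unfolding iota_C4_def by (rule Least_le) (use iso in blast)
  moreover have "card D \<le> card V div 5" using le bc0 by simp
  ultimately show ?thesis by linarith
qed


end
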